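(* Let $p$ be a prime with $p\equiv1\pmod 4$. For every $0<\varepsilon<\frac34$ there is an integer $q_\varepsilon$ such that for every prime $q\ge q_\varepsilon$ with $q\equiv1\pmod4$ and $q\ne p$, either the spectrum of the Cayley graph $C(G_q,S^{p,q})$ contains a sub-multiset of size at least $(\frac34-\varepsilon)|G_q|$ which is symmetric about the origin, or there exist $\tilde\sigma_q\in\left\{\begin{pmatrix}0&1\\1&0\end{pmatrix},\begin{pmatrix}0&1\\-1&0\end{pmatrix},\begin{pmatrix}-1&0\\0&1\end{pmatrix}\right\}$ and $\tilde\tau_q\in\left\{\begin{pmatrix}0&1\\i&0\end{pmatrix},\begin{pmatrix}0&-1\\i&0\end{pmatrix},\begin{pmatrix}-1&0\\0&1\end{pmatrix}\right\}$ such that $C(G_q,S^{p,q})$ is non-isomorphic to each of the twisted Cayley graphs $C(G_q,S^{p,q})^{\sigma_q}$ and $C(G_q,S^{p,q})^{\tau_q}$, where $\sigma_q$ (resp. $\tau_q$) is the automorphism of $G_q$ given by conjugation by $\tilde\sigma_q$ (resp. $\tilde\tau_q$).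
   Context: For a prime $q\equiv1\pmod4$, $i$ denotes an integer with $i^2\equiv-1\pmod q$. $G_q$ is $\mathrm{PSL}_2(\mathbb F_q)$ if $p$ is a square modulo $q$ and $\mathrm{PGL}_2(\mathbb F_q)$ otherwise. $S^{p,q}$ is the set of elements of $\mathrm{PGL}_2(\mathbb F_q)$ represented by $\begin{pmatrix}a_0+ia_1&a_2+ia_3\\-a_2+ia_3&a_0-ia_1\end{pmatrix}$ (entries mod $q$) with $a_0,a_1,a_2,a_3$ integers, $a_0^2+a_1^2+a_2^2+a_3^2=p$, and $a_0-1,a_1,a_2,a_3$ even. The matrices listed are in $\mathrm{GL}_2(\mathbb F_q)$ and act on $G_q$ by conjugation. For a group $G$, subset $S$ and automorphism $\tau$, $C(G,S)$ has an edge from $x$ to $xs$ and $C(G,S)^\tau$ an edge from $x$ to $\tau(xs)$ for each $s\in S$. The spectrum is the multiset of eigenvalues of the adjacency matrix; a multiset $M$ is symmetric about the origin if $M=-M$. *)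

theory Defs
  imports "HOL-Number_Theory.Number_Theory" "HOL-Combinatorics.Combinatorics"
    "HOL-Computational_Algebra.Polynomial" "HOL-Library.Multiset"
begin

text \<open>A 2x2 integer matrix (a,b,c,d) stands for [[a,b],[c,d]]; entries are read modulo q.\<close>
type_synonym mat2 = "int \<times> int \<times> int \<times> int"

fun mat2_mult :: "mat2 \<Rightarrow> mat2 \<Rightarrow> mat2" where
  "mat2_mult (a,b,c,d) (e,f,g,h) = (a*e + b*g, a*f + b*h, c*e + d*g, c*f + d*h)"

fun mat2_det :: "mat2 \<Rightarrow> int" where
  "mat2_det (a,b,c,d) = a*d - b*c"

text \<open>adjugate: M * adj M = det M * I, so adj M represents M^-1 in PGL_2.\<close>
fun mat2_adj :: "mat2 \<Rightarrow> mat2" where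
  "mat2_adj (a,b,c,d) = (d, -b, -c, a)"

fun mat2_red :: "int \<Rightarrow> mat2 \<Rightarrow> mat2" where
  "mat2_red q (a,b,c,d) = (a mod q, b mod q, c mod q, d mod q)"

fun mat2_smult :: "int \<Rightarrow> mat2 \<Rightarrow> mat2" where
  "mat2_smult k (a,b,c,d) = (k*a, k*b, k*c, k*d)"

text \<open>The element of PGL_2(F_q) represented by M: the set of all reduced nonzero scalar multiples.\<close>
definition pgl_class :: "int \<Rightarrow> mat2 \<Rightarrow> mat2 set" where
  "pgl_class q M = {mat2_red q (mat2_smult k M) | k. \<not> q dvd k}"

definition PGL2 :: "int \<Rightarrow> mat2 set set" where
  "PGL2 q = {pgl_class q M | M. \<not> q dvd mat2_det M}"

text \<open>Image of SL_2(F_q) in PGL_2(F_q) = PSL_2(F_q): classes of matrices with square determinant.\<close>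
definition PSL2 :: "int \<Rightarrow> mat2 set set" where
  "PSL2 q = {pgl_class q M | M. \<not> q dvd mat2_det M \<and> QuadRes q (mat2_det M)}"

definition Gq :: "int \<Rightarrow> int \<Rightarrow> mat2 set set" where
  "Gq p q = (if QuadRes q p then PSL2 q else PGL2 q)"

definition pgl_mult :: "int \<Rightarrow> mat2 set \<Rightarrow> mat2 set \<Rightarrow> mat2 set" where
  "pgl_mult q X Y = pgl_class q (mat2_mult (SOME M. M \<in> X) (SOME N. N \<in> Y))"

definition pgl_conj :: "int \<Rightarrow> mat2 \<Rightarrow> mat2 set \<Rightarrow> mat2 set" where
  "pgl_conj q T X = pgl_class q (mat2_mult (mat2_mult T (SOME M. M \<in> X)) (mat2_adj T))"

definition Spq :: "int \<Rightarrow> int \<Rightarrow> int \<Rightarrow> mat2 set set" where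
  "Spq p q i = {pgl_class q (a0 + i*a1, a2 + i*a3, -a2 + i*a3, a0 - i*a1) | a0 a1 a2 a3.
      a0^2 + a1^2 + a2^2 + a3^2 = p \<and> even (a0 - 1) \<and> even a1 \<and> even a2 \<and> even a3}"

definition cayley_adj :: "int \<Rightarrow> mat2 set set \<Rightarrow> mat2 set \<Rightarrow> mat2 set \<Rightarrow> nat" where
  "cayley_adj q S x y = card {s \<in> S. pgl_mult q x s = y}"

text \<open>Twisted Cayley graph C(G,S)^tau, tau = conjugation by T: edge x \<rightarrow> tau(x s).\<close>
definition twisted_adj :: "int \<Rightarrow> mat2 \<Rightarrow> mat2 set set \<Rightarrow> mat2 set \<Rightarrow> mat2 set \<Rightarrow> nat" where
  "twisted_adj q T S x y = card {s \<in> S. pgl_conj q T (pgl_mult q x s) = y}"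

definition graph_iso :: "'v set \<Rightarrow> ('v \<Rightarrow> 'v \<Rightarrow> nat) \<Rightarrow> ('v \<Rightarrow> 'v \<Rightarrow> nat) \<Rightarrow> bool" where
  "graph_iso V A B = (\<exists>f. bij_betw f V V \<and> (\<forall>x\<in>V. \<forall>y\<in>V. B (f x) (f y) = A x y))"

text \<open>Characteristic polynomial det(X I - A) of the adjacency matrix indexed by V (Leibniz formula).\<close>
definition char_poly_adj :: "'v set \<Rightarrow> ('v \<Rightarrow> 'v \<Rightarrow> nat) \<Rightarrow> complex poly" where
  "char_poly_adj V A = (\<Sum>\<pi> \<in> {\<pi>. \<pi> permutes V}. of_int (sign \<pi>) *
      (\<Prod>x\<in>V. (if \<pi> x = x then [:0, 1:] else 0) - [:of_nat (A x (\<pi> x)):]))"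

definition spectrum_adj :: "'v set \<Rightarrow> ('v \<Rightarrow> 'v \<Rightarrow> nat) \<Rightarrow> complex multiset" where
  "spectrum_adj V A = proots (char_poly_adj V A)"

definition symmetric_mset :: "complex multiset \<Rightarrow> bool" where
  "symmetric_mset M = (image_mset uminus M = M)"

end

theory Submission
  imports Defs "HOL-Computational_Algebra.Fundamental_Theorem_Algebra"
begin

lemma mod_aux: "((x::int)*y+z*w) mod q = ((x mod q)*(y mod q) + (z mod q)*(w mod q)) mod q"
proof -
  have "((x mod q)*(y mod q) + (z mod q)*(w mod q)) mod q = (((x mod q)*(y mod q)) mod q + ((z mod q)*(w mod q)) mod q) mod q" by (rule mod_add_eq[symmetric])
  also have "... = ((x*y) mod q + (z*w) mod q) mod q" by (simp only: mod_mult_eq)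
  also have "... = (x*y+z*w) mod q" by (rule mod_add_eq)
  finally show ?thesis by simp
qed
lemma red_mult: "mat2_red q (mat2_mult M N) = mat2_red q (mat2_mult (mat2_red q M) (mat2_red q N))"
proof -
  obtain a b c d where M: "M = (a,b,c,d)" by (cases M rule: prod_cases4)
  obtain e f g h where N: "N = (e,f,g,h)" by (cases N rule: prod_cases4)
  show ?thesis unfolding M N
    by (simp only: mat2_mult.simps mat2_red.simps prod.inject) (intro conjI; rule mod_aux)
qed
lemma red_smult: "mat2_red q (mat2_smult k M) = mat2_red q (mat2_smult k (mat2_red q M))"
  by (cases M rule: prod_cases4) (simp add: mod_mult_right_eq)
lemma red_red[simp]: "mat2_red q (mat2_red q M) = mat2_red q M"
  by (cases M rule: prod_cases4) simp

lemma smult_smult[simp]: "mat2_smult j (mat2_smult k M) = mat2_smult (j*k) M"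
  by (cases M rule: prod_cases4) (simp add: algebra_simps)

lemma smult_1[simp]: "mat2_smult 1 M = M"
  by (cases M rule: prod_cases4) simp

lemma mult_smult: "mat2_mult (mat2_smult k M) (mat2_smult j N) = mat2_smult (k*j) (mat2_mult M N)"
  by (cases M rule: prod_cases4; cases N rule: prod_cases4) (simp add: algebra_simps)

lemma mult_smult_left: "mat2_mult (mat2_mult T (mat2_smult k M)) U = mat2_smult k (mat2_mult (mat2_mult T M) U)"
  by (cases M rule: prod_cases4; cases T rule: prod_cases4; cases U rule: prod_cases4) (simp add: algebra_simps)

lemma red_smult_cong:
  assumes "[j1 = j2] (mod q)"
  shows "mat2_red q (mat2_smult j1 M) = mat2_red q (mat2_smult j2 M)"
proof -
  have h: "j1 mod q = j2 mod q" using assms by (simp add: cong_def)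
  obtain a b c d where M: "M = (a,b,c,d)" by (cases M rule: prod_cases4)
  show ?thesis unfolding M
    by (simp only: mat2_smult.simps mat2_red.simps prod.inject) (intro conjI; rule mod_mult_cong[OF h refl])
qed

lemma class_red[simp]: "pgl_class q (mat2_red q M) = pgl_class q M"
  unfolding pgl_class_def by (metis red_smult)

lemma class_smult:
  assumes "prime q" "\<not> q dvd k"
  shows "pgl_class q (mat2_smult k M) = pgl_class q M"
proof
  show "pgl_class q (mat2_smult k M) \<subseteq> pgl_class q M"
  proof
    fix X assume "X \<in> pgl_class q (mat2_smult k M)"
    then obtain j where j: "X = mat2_red q (mat2_smult j (mat2_smult k M))" "\<not> q dvd j" unfolding pgl_class_def by auto
    have "\<not> q dvd j*k" using j assms by (simp add: prime_dvd_mult_iff)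
    moreover have "X = mat2_red q (mat2_smult (j*k) M)" using j by simp
    ultimately show "X \<in> pgl_class q M" unfolding pgl_class_def by blast
  qed
next
  have "coprime q k" using assms by (intro prime_imp_coprime)
  hence "coprime k q" by (simp add: coprime_commute)
  then obtain k' where k': "[k * k' = 1] (mod q)" using cong_solve_coprime_int by blast
  have nk': "\<not> q dvd k'"
  proof
    assume "q dvd k'"
    hence "q dvd k*k'" by simp
    hence "q dvd 1" using k' by (simp add: cong_dvd_iff)
    thus False using assms(1) by (simp add: not_prime_unit)
  qed
  show "pgl_class q M \<subseteq> pgl_class q (mat2_smult k M)"
  proof
    fix X assume "X \<in> pgl_class q M"
    then obtain j where j: "X = mat2_red q (mat2_smult j M)" "\<not> q dvd j" unfolding pgl_class_def by auto
    have "[j * (k * k') = j * 1] (mod q)" using k' by (rule cong_scalar_left)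
    hence "[j * k' * k = j] (mod q)" by (simp add: ac_simps)
    hence "mat2_red q (mat2_smult (j * k' * k) M) = mat2_red q (mat2_smult j M)"
      by (rule red_smult_cong)
    hence "X = mat2_red q (mat2_smult (j*k') (mat2_smult k M))"
      using j(1) by simp
    moreover have "\<not> q dvd j*k'" using j nk' assms by (simp add: prime_dvd_mult_iff)
    ultimately show "X \<in> pgl_class q (mat2_smult k M)" unfolding pgl_class_def by blast
  qed
qed

lemma red_mem: "prime q \<Longrightarrow> mat2_red q M \<in> pgl_class q M"
  unfolding pgl_class_def by (rule CollectI, rule exI[of _ 1]) (auto simp: not_prime_unit)

lemma mem_class: "Y \<in> pgl_class q M \<Longrightarrow> \<exists>k. \<not> q dvd k \<and> Y = mat2_red q (mat2_smult k M)"
  unfolding pgl_class_def by auto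

lemma class_of_mem: "prime q \<Longrightarrow> Y \<in> pgl_class q M \<Longrightarrow> pgl_class q Y = pgl_class q M"
  using mem_class class_smult class_red by metis

lemma some_mem: "prime q \<Longrightarrow> (SOME Y. Y \<in> pgl_class q M) \<in> pgl_class q M"
  using red_mem by (rule someI)

lemma class_eq_iff:
  assumes "prime q"
  shows "pgl_class q A = pgl_class q B \<longleftrightarrow> (\<exists>k. \<not> q dvd k \<and> mat2_red q A = mat2_red q (mat2_smult k B))"
proof
  assume "pgl_class q A = pgl_class q B"
  then show "\<exists>k. \<not> q dvd k \<and> mat2_red q A = mat2_red q (mat2_smult k B)"
    using red_mem[OF assms, of A] mem_class by auto
next
  assume "\<exists>k. \<not> q dvd k \<and> mat2_red q A = mat2_red q (mat2_smult k B)"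
  then obtain k where "\<not> q dvd k" "mat2_red q A = mat2_red q (mat2_smult k B)" by blast
  then show "pgl_class q A = pgl_class q B"
    by (metis assms class_red class_smult)
qed

lemma pgl_mult_class:
  assumes "prime q"
  shows "pgl_mult q (pgl_class q M) (pgl_class q N) = pgl_class q (mat2_mult M N)"
proof -
  obtain k where k: "\<not> q dvd k" "(SOME Y. Y \<in> pgl_class q M) = mat2_red q (mat2_smult k M)"
    using mem_class[OF some_mem[OF assms]] by blast
  obtain j where j: "\<not> q dvd j" "(SOME Y. Y \<in> pgl_class q N) = mat2_red q (mat2_smult j N)"
    using mem_class[OF some_mem[OF assms]] by blast
  have "pgl_mult q (pgl_class q M) (pgl_class q N) =
    pgl_class q (mat2_red q (mat2_mult (mat2_red q (mat2_smult k M)) (mat2_red q (mat2_smult j N))))"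
    unfolding pgl_mult_def k j by simp
  also have "\<dots> = pgl_class q (mat2_smult (k*j) (mat2_mult M N))"
    by (metis red_mult mult_smult class_red)
  also have "\<dots> = pgl_class q (mat2_mult M N)"
    using class_smult assms k j by (simp add: prime_dvd_mult_iff)
  finally show ?thesis .
qed

lemma pgl_conj_class:
  assumes "prime q"
  shows "pgl_conj q T (pgl_class q M) = pgl_class q (mat2_mult (mat2_mult T M) (mat2_adj T))"
proof -
  obtain k where k: "\<not> q dvd k" "(SOME Y. Y \<in> pgl_class q M) = mat2_red q (mat2_smult k M)"
    using mem_class[OF some_mem[OF assms]] by blast
  have "pgl_conj q T (pgl_class q M) =
    pgl_class q (mat2_red q (mat2_mult (mat2_mult T (mat2_red q (mat2_smult k M))) (mat2_adj T)))"
    unfolding pgl_conj_def k by simp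
  also have "\<dots> = pgl_class q (mat2_red q (mat2_mult (mat2_mult T (mat2_smult k M)) (mat2_adj T)))"
    by (metis red_mult red_red)
  also have "\<dots> = pgl_class q (mat2_smult k (mat2_mult (mat2_mult T M) (mat2_adj T)))"
    by (simp add: mult_smult_left)
  also have "\<dots> = pgl_class q (mat2_mult (mat2_mult T M) (mat2_adj T))"
    using class_smult assms k by simp
  finally show ?thesis .
qed

lemma prime_not_square:
  assumes "prime (p::int)" shows "p \<noteq> a^2"
proof
  assume h: "p = a^2"
  have "\<bar>a\<bar> dvd p" using h by (simp add: power2_eq_square)
  hence "\<bar>a\<bar> = 1 \<or> \<bar>a\<bar> = p" using assms by (simp add: prime_int_iff)
  thus False using h assms
    by (metis abs_power2 not_prime_1 power2_eq_square mult_cancel_right1 not_prime_0 power2_abs)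
qed

lemma dvd_small_zero:
  assumes "q dvd (a::int)" "a^2 < q^2" shows "a = 0"
proof (rule ccontr)
  assume "a \<noteq> 0"
  obtain t where t: "a = q * t" using assms(1) by blast
  with \<open>a \<noteq> 0\<close> have "t \<noteq> 0" by auto
  hence "1 \<le> t^2" by (simp add: int_one_le_iff_zero_less)
  hence "q^2 * 1 \<le> q^2 * t^2" by (intro mult_left_mono) auto
  hence "q^2 \<le> a^2" using t by (simp add: power_mult_distrib)
  thus False using assms(2) by simp
qed

lemma adj_mult_self: "mat2_mult (mat2_adj M) M = (mat2_det M, 0, 0, mat2_det M)"
  by (cases M rule: prod_cases4) (simp add: algebra_simps)

lemma adj_mult_smult: "mat2_mult (mat2_adj M) (mat2_smult k (mat2_mult M N)) = mat2_smult (k * mat2_det M) N"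
  by (cases M rule: prod_cases4; cases N rule: prod_cases4) (simp add: algebra_simps)

lemma Spq_elem:
  assumes "s \<in> Spq p q i"
  obtains a0 a1 a2 a3 where "s = pgl_class q (a0 + i*a1, a2 + i*a3, -a2 + i*a3, a0 - i*a1)"
    "a0^2 + a1^2 + a2^2 + a3^2 = p" "even (a0 - 1)" "even a1" "even a2" "even a3"
  using assms unfolding Spq_def by blast

lemma scalar_cong:
  assumes q: "prime q" and D: "\<not> q dvd D" and k: "\<not> q dvd k"
    and h: "mat2_red q (D, 0, 0, D) = mat2_red q (mat2_smult (k * D) (al, be, ga, de))"
  shows "q dvd be" "q dvd ga" "q dvd al - de"
proof -
  have e: "D mod q = (k*D*al) mod q" "0 mod q = (k*D*be) mod q" "0 mod q = (k*D*ga) mod q" "D mod q = (k*D*de) mod q"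
    using h by simp_all
  have "q dvd k*D*be" using e(2) by (simp add: mod_eq_0_iff_dvd)
  thus "q dvd be" using q D k by (simp add: prime_dvd_mult_iff)
  have "q dvd k*D*ga" using e(3) by (simp add: mod_eq_0_iff_dvd)
  thus "q dvd ga" using q D k by (simp add: prime_dvd_mult_iff)
  have "q dvd k*D*al - k*D*de" using e(1) e(4) by (metis mod_eq_dvd_iff)
  hence "q dvd k*D*(al - de)" by (simp add: algebra_simps)
  thus "q dvd al - de" using q D k by (simp add: prime_dvd_mult_iff)
qed

lemma no_loop:
  assumes p: "prime p" and q: "prime q" "p < q" "q \<noteq> 2" and i: "[i^2 = -1] (mod q)"
    and x: "x = pgl_class q M" "\<not> q dvd mat2_det M" and s: "s \<in> Spq p q i"
  shows "pgl_mult q x s \<noteq> x"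
proof
  assume eq: "pgl_mult q x s = x"
  obtain a0 a1 a2 a3 where S: "s = pgl_class q (a0 + i*a1, a2 + i*a3, -a2 + i*a3, a0 - i*a1)"
    and sum: "a0^2 + a1^2 + a2^2 + a3^2 = p" using Spq_elem[OF s] by metis
  define N where "N = (a0 + i*a1, a2 + i*a3, -a2 + i*a3, a0 - i*a1)"
  have "pgl_class q (mat2_mult M N) = pgl_class q M"
    using eq unfolding x S N_def pgl_mult_class[OF q(1)] .
  then obtain k where k: "\<not> q dvd k" "mat2_red q M = mat2_red q (mat2_smult k (mat2_mult M N))"
    using class_eq_iff[OF q(1)] by metis
  have "mat2_red q (mat2_mult (mat2_adj M) M) = mat2_red q (mat2_mult (mat2_adj M) (mat2_smult k (mat2_mult M N)))"
    by (metis k(2) red_mult)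
  hence h: "mat2_red q (mat2_det M, 0, 0, mat2_det M) = mat2_red q (mat2_smult (k * mat2_det M) N)"
    by (simp only: adj_mult_self adj_mult_smult)
  note sc = scalar_cong[OF q(1) x(2) k(1) h[unfolded N_def]]
  have q2: "\<not> q dvd 2"
  proof
    assume "q dvd 2" hence "q \<le> 2" by (simp add: zdvd_imp_le)
    moreover have "q \<ge> 2" using q(1) by (simp add: prime_ge_2_int)
    ultimately show False using q(3) by simp
  qed
  have qi: "\<not> q dvd i"
  proof
    assume "q dvd i" hence "q dvd i^2" by (simp add: power2_eq_square)
    moreover have "q dvd i^2 + 1" using i by (simp add: cong_iff_dvd_diff)
    ultimately have "q dvd 1" by (metis dvd_add_right_iff)
    thus False using q by (simp add: not_prime_unit)
  qed
  have "q dvd (a2 + i*a3) - (-a2 + i*a3)" using dvd_diff[OF sc(1) sc(2)] .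
  moreover have "(a2 + i*a3) - (-a2 + i*a3) = 2*a2" by simp
  ultimately have "q dvd 2*a2" by simp
  hence d2: "q dvd a2" using q2 q by (simp add: prime_dvd_mult_iff)
  have "q dvd (a2 + i*a3) + (-a2 + i*a3)" using dvd_add[OF sc(1) sc(2)] .
  moreover have "(a2 + i*a3) + (-a2 + i*a3) = 2*i*a3" by simp
  ultimately have "q dvd 2*i*a3" by (simp add: ac_simps)
  hence d3: "q dvd a3" using q2 qi q by (simp add: prime_dvd_mult_iff)
  have "(a0 + i*a1) - (a0 - i*a1) = 2*i*a1" by simp
  hence "q dvd 2*i*a1" using sc(3) by (simp add: ac_simps)
  hence d1: "q dvd a1" using q2 qi q by (simp add: prime_dvd_mult_iff)
  have pq2: "p < q^2" using q p by (smt (verit) prime_gt_1_int power2_eq_square mult_le_cancel_left1)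
  have "a1^2 \<le> p" "a2^2 \<le> p" "a3^2 \<le> p" using sum by (smt (verit) zero_le_power2)+
  hence "a1 = 0" "a2 = 0" "a3 = 0" using d1 d2 d3 pq2 dvd_small_zero by (meson order.strict_trans1)+
  hence "p = a0^2" using sum by simp
  thus False using prime_not_square[OF p] by blast
qed

lemma minus_one_QR:
  assumes p: "prime (p::int)" and p4: "[p = 1] (mod 4)"
  shows "\<exists>x. [x^2 = -1] (mod p)"
proof -
  have pm: "p mod 4 = 1" using p4 by (simp add: cong_def)
  have p2: "p > 2"
  proof -
    have "p \<ge> 2" using p by (simp add: prime_ge_2_int)
    moreover have "p \<noteq> 2" using pm by auto
    ultimately show ?thesis by simp
  qed
  define n where "n = nat p"
  have n1: "prime n" using p prime_int_nat_transfer unfolding n_def by blast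
  have n2: "2 < n" using p2 unfolding n_def by simp
  have n3: "int n = p" using p2 unfolding n_def by simp
  note n = n1 n2 n3
  have E: "[Legendre (-1) (int n) = (-1) ^ ((n - 1) div 2)] (mod int n)"
    by (rule euler_criterion[OF n(1) n(2)])
  define t where "t = p div 4"
  have t: "p = 4*t + 1" using pm div_mult_mod_eq[of p 4] unfolding t_def by linarith
  have "t \<ge> 0" using p2 unfolding t_def by simp
  hence "n = 4 * nat t + 1" using t unfolding n_def by (simp add: nat_mult_distrib nat_add_distrib)
  hence "(n - 1) div 2 = 2 * nat t" by simp
  hence ev: "(-1::int) ^ ((n - 1) div 2) = 1" by simp
  have L: "[Legendre (-1) p = 1] (mod p)" using E ev n(3) by simp
  have nz: "\<not> [-1 = 0] (mod p)"
  proof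
    assume "[-1 = 0] (mod p)" hence "p dvd 1" by (simp add: cong_0_iff)
    thus False using p by (simp add: not_prime_unit)
  qed
  have "QuadRes p (-1)"
  proof (rule ccontr)
    assume "\<not> QuadRes p (-1)"
    hence "Legendre (-1) p = -1" using nz by (simp add: Legendre_def)
    hence "[-1 = 1] (mod p)" using L by simp
    hence "p dvd 2" by (simp add: cong_iff_dvd_diff)
    hence "p \<le> 2" by (simp add: zdvd_imp_le)
    thus False using p2 by simp
  qed
  thus ?thesis by (simp add: QuadRes_def)
qed

lemma two_squares:
  assumes p: "prime (p::int)" and p4: "[p = 1] (mod 4)"
  shows "\<exists>a b. p = a^2 + b^2"
proof -
  obtain x where x: "[x^2 = -1] (mod p)" using minus_one_QR[OF assms] by blast
  have p0: "p > 1" using p by (simp add: prime_gt_1_int)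
  define m where "m = \<lfloor>sqrt (real_of_int p)\<rfloor>"
  have m0: "m \<ge> 0" unfolding m_def using p0 by simp
  have rp: "real_of_int p \<ge> 0" using p0 by simp
  have sq: "sqrt (real_of_int p) ^ 2 = real_of_int p" using rp by (rule real_sqrt_pow2)
  have "real_of_int m \<le> sqrt (real_of_int p)" unfolding m_def by simp
  hence "real_of_int m ^ 2 \<le> sqrt (real_of_int p) ^ 2" using m0 by (intro power_mono) auto
  hence "real_of_int (m ^ 2) \<le> real_of_int p" using sq by simp
  hence mp: "m^2 \<le> p" by (simp only: of_int_le_iff)
  have "sqrt (real_of_int p) < real_of_int m + 1" unfolding m_def by linarith
  hence "sqrt (real_of_int p) ^ 2 < (real_of_int m + 1) ^ 2" using p0 by (intro power_strict_mono) auto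
  hence "real_of_int p < real_of_int ((m + 1) ^ 2)" using sq by simp
  hence mp2: "p < (m+1)^2" by (simp only: of_int_less_iff)
  have mneq: "m^2 \<noteq> p" using prime_not_square[OF p] by metis
  define D where "D = {0..m} \<times> {0..m}"
  define f where "f = (\<lambda>(u,v). (u - x*v) mod p)"
  have cD: "card D = nat ((m+1)^2)" unfolding D_def using m0
    by (simp add: card_cartesian_product power2_eq_square nat_mult_distrib)
  have fD: "f ` D \<subseteq> {0..p-1}" unfolding f_def using p0 by auto
  have "\<not> inj_on f D"
  proof
    assume "inj_on f D"
    hence "card D \<le> card {0..p-1}" using fD by (intro card_inj_on_le) auto
    thus False using cD mp2 p0 by simp
  qed
  then obtain u1 v1 u2 v2 where uv: "(u1,v1) \<in> D" "(u2,v2) \<in> D" "(u1,v1) \<noteq> (u2,v2)" "f (u1,v1) = f (u2,v2)"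
    unfolding inj_on_def by auto
  define a where "a = u1 - u2"
  define b where "b = v1 - v2"
  have ab0: "a \<noteq> 0 \<or> b \<noteq> 0" using uv(3) unfolding a_def b_def by auto
  have ab: "\<bar>a\<bar> \<le> m" "\<bar>b\<bar> \<le> m" using uv(1,2) unfolding D_def a_def b_def by auto
  have "[u1 - x*v1 = u2 - x*v2] (mod p)" using uv(4) unfolding f_def cong_def by simp
  hence "[a = x*b] (mod p)" unfolding a_def b_def
    by (simp add: cong_iff_dvd_diff algebra_simps)
  hence "[a^2 = (x*b)^2] (mod p)" by (rule cong_pow)
  hence "[a^2 = x^2*b^2] (mod p)" by (simp add: power_mult_distrib)
  moreover have "[x^2*b^2 = -1*b^2] (mod p)" using x by (rule cong_scalar_right)
  ultimately have "[a^2 = -1*b^2] (mod p)" by (rule cong_trans)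
  hence "[a^2 = - (b^2)] (mod p)" by simp
  hence dv: "p dvd a^2 + b^2" by (simp add: cong_iff_dvd_diff)
  have pos: "a^2 + b^2 > 0" using ab0 by (auto simp: add_pos_nonneg add_nonneg_pos)
  have lt: "a^2 + b^2 < 2*p"
  proof -
    have "\<bar>a\<bar>^2 \<le> m^2" by (rule power_mono[OF ab(1)]) simp
    moreover have "\<bar>b\<bar>^2 \<le> m^2" by (rule power_mono[OF ab(2)]) simp
    ultimately have "a^2 \<le> m^2" "b^2 \<le> m^2" by simp_all
    moreover have "m^2 < p" using mp mneq by simp
    ultimately show ?thesis by simp
  qed
  obtain c where c: "a^2 + b^2 = p * c" using dv by blast
  have "p * c > 0" using pos c by simp
  hence "c > 0" using p0 by (simp add: zero_less_mult_iff)
  moreover have "p * c < p * 2" using lt c by (simp add: ac_simps)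
  hence "c < 2" using p0 by simp
  ultimately have "c = 1" by simp
  thus ?thesis using c by auto
qed

lemma abs_le_sq: "\<bar>a::int\<bar> \<le> a^2"
proof (cases "a = 0")
  case False
  hence "1 \<le> \<bar>a\<bar>" by simp
  hence "\<bar>a\<bar> * 1 \<le> \<bar>a\<bar> * \<bar>a\<bar>" by (intro mult_left_mono) auto
  thus ?thesis by (simp add: power2_eq_square abs_mult_self_eq)
qed simp

lemma Spq_finite:
  assumes "p \<ge> 0"
  shows "finite (Spq p q i)"
proof -
  define F where "F = (\<lambda>(a0::int,a1::int,a2::int,a3::int). pgl_class q (a0 + i*a1, a2 + i*a3, -a2 + i*a3, a0 - i*a1))"
  have "Spq p q i \<subseteq> F ` ({-p..p} \<times> {-p..p} \<times> {-p..p} \<times> {-p..p})"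
  proof
    fix s assume "s \<in> Spq p q i"
    then obtain a0 a1 a2 a3 where S: "s = pgl_class q (a0 + i*a1, a2 + i*a3, -a2 + i*a3, a0 - i*a1)"
      and sum: "a0^2 + a1^2 + a2^2 + a3^2 = p" by (rule Spq_elem)
    have "a0^2 \<le> p" "a1^2 \<le> p" "a2^2 \<le> p" "a3^2 \<le> p"
      using sum zero_le_power2[of a0] zero_le_power2[of a1] zero_le_power2[of a2] zero_le_power2[of a3] by linarith+
    hence "\<bar>a0\<bar> \<le> p" "\<bar>a1\<bar> \<le> p" "\<bar>a2\<bar> \<le> p" "\<bar>a3\<bar> \<le> p"
      using abs_le_sq[of a0] abs_le_sq[of a1] abs_le_sq[of a2] abs_le_sq[of a3] by linarith+
    hence "(a0,a1,a2,a3) \<in> {-p..p} \<times> {-p..p} \<times> {-p..p} \<times> {-p..p}" by auto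
    moreover have "s = F (a0,a1,a2,a3)" unfolding F_def S by simp
    ultimately show "s \<in> F ` ({-p..p} \<times> {-p..p} \<times> {-p..p} \<times> {-p..p})" by blast
  qed
  thus ?thesis by (rule finite_subset) auto
qed

lemma two_squares_parity:
  assumes p: "prime (p::int)" and p4: "[p = 1] (mod 4)"
  obtains a b where "p = a^2 + b^2" "odd a" "even b"
proof -
  obtain a b where ab: "p = a^2 + b^2" using two_squares[OF assms] by blast
  have "p mod 4 = 1" using p4 by (simp add: cong_def)
  hence op: "odd p" by (metis dvd_mod_iff even_numeral odd_one dvd_trans)
  show ?thesis
  proof (cases "odd a")
    case True
    hence "odd (a^2)" by simp
    hence "even (b^2)" using op ab by auto
    hence "even b" by simp
    thus ?thesis using that ab True by blast
  next
    case False
    hence "even (a^2)" by simp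
    hence "odd (b^2)" using op ab by auto
    hence "odd b" by simp
    thus ?thesis using that[of b a] ab False by (simp add: add.commute)
  qed
qed

definition Tdiag :: mat2 where "Tdiag = (-1, 0, 0, 1)"

lemma cong_by_dvd: "(q::int) dvd x - y \<Longrightarrow> x mod q = y mod q"
  by (simp add: mod_eq_dvd_iff)

lemma loop_exists:
  assumes p: "prime p" "[p = 1] (mod 4)" and q: "prime q" "p < q" "q \<noteq> 2"
    and QR: "QuadRes q p"
  shows "\<exists>x0\<in>PSL2 q. \<exists>s0\<in>Spq p q i. pgl_conj q Tdiag (pgl_mult q x0 s0) = x0"
proof -
  obtain a b where ab: "p = a^2 + b^2" "odd a" "even b" using two_squares_parity[OF p] by blast
  obtain c where c: "[c^2 = p] (mod q)" using QR unfolding QuadRes_def by blast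
  have b0: "b \<noteq> 0"
  proof
    assume "b = 0" hence "p = a^2" using ab by simp
    thus False using prime_not_square[OF p(1)] by blast
  qed
  have p1: "p > 1" using p(1) by (simp add: prime_gt_1_int)
  have "q * 1 \<le> q * q" using q p1 by (intro mult_left_mono) auto
  hence pq2: "p < q^2" using q by (simp add: power2_eq_square)
  have qb: "\<not> q dvd b"
  proof
    assume "q dvd b"
    moreover have "b^2 < q^2" using ab(1) pq2 zero_le_power2[of a] by linarith
    ultimately have "b = 0" by (rule dvd_small_zero)
    thus False using b0 by simp
  qed
  have qc: "\<not> q dvd c"
  proof
    assume "q dvd c" hence "q dvd c^2" by (simp add: power2_eq_square)
    moreover have "q dvd c^2 - p" using c by (simp add: cong_iff_dvd_diff)
    ultimately have "q dvd c^2 - (c^2 - p)" by (rule dvd_diff)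
    hence "q dvd p" by simp
    hence "q \<le> p" using p1 by (simp add: zdvd_imp_le)
    thus False using q by simp
  qed
  have q2: "\<not> q dvd 2"
  proof
    assume "q dvd 2" hence "q \<le> 2" by (simp add: zdvd_imp_le)
    moreover have "q \<ge> 2" using q(1) by (simp add: prime_ge_2_int)
    ultimately show False using q(3) by simp
  qed
  define nu where "nu = 2*b*c"
  define X where "X = (b, a - c, nu*b, nu*(a+c))"
  have detX: "mat2_det X = nu^2" unfolding X_def nu_def by (simp add: power2_eq_square algebra_simps)
  have qnu: "\<not> q dvd nu" unfolding nu_def using q qb qc q2 by (simp add: prime_dvd_mult_iff)
  have "\<not> q dvd mat2_det X" using detX qnu q by (simp add: prime_dvd_power_iff)
  moreover have "QuadRes q (mat2_det X)" unfolding detX QuadRes_def using cong_refl by blast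
  ultimately have x0: "pgl_class q X \<in> PSL2 q" unfolding PSL2_def by blast
  have s0: "pgl_class q (a, b, -b, a) \<in> Spq p q i"
  proof -
    have "pgl_class q (a, b, -b, a) = pgl_class q (a + i*0, b + i*0, -b + i*0, a - i*0)" by simp
    moreover have "a^2 + 0^2 + b^2 + 0^2 = p" using ab by simp
    moreover have "even (a - 1)" using ab by simp
    ultimately show ?thesis unfolding Spq_def using ab by blast
  qed
  have pcd: "q dvd p - c^2" using c by (simp add: cong_iff_dvd_diff dvd_diff_commute)
  have "pgl_conj q Tdiag (pgl_mult q (pgl_class q X) (pgl_class q (a, b, -b, a)))
      = pgl_class q (mat2_mult (mat2_mult Tdiag (mat2_mult X (a, b, -b, a))) (mat2_adj Tdiag))"
    by (simp add: pgl_mult_class[OF q(1)] pgl_conj_class[OF q(1)])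
  also have "\<dots> = pgl_class q X"
  proof -
    have "mat2_red q (mat2_mult (mat2_mult Tdiag (mat2_mult X (a, b, -b, a))) (mat2_adj Tdiag))
        = mat2_red q (mat2_smult (-c) X)"
    proof -
      have e1: "q dvd (-(b*a - (a-c)*b)) - (-c*b)" by (simp add: algebra_simps)
      have "b*b + (a-c)*a - (-c*(a-c)) = p - c^2" using ab(1) by (simp add: power2_eq_square algebra_simps)
      hence e2: "q dvd (b*b + (a-c)*a) - (-c*(a-c))" using pcd by simp
      have e3: "q dvd (nu*b*a - nu*(a+c)*b) - (-c*(nu*b))" by (simp add: algebra_simps)
      have "(-(nu*b*b + nu*(a+c)*a)) - (-c*(nu*(a+c))) = - nu * (p - c^2)" using ab(1) by (simp add: power2_eq_square algebra_simps)
      hence e4: "q dvd (-(nu*b*b + nu*(a+c)*a)) - (-c*(nu*(a+c)))" using pcd by simp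
      show ?thesis unfolding X_def Tdiag_def
        apply (simp only: mat2_mult.simps mat2_adj.simps mat2_smult.simps mat2_red.simps prod.inject)
        using cong_by_dvd[OF e1] cong_by_dvd[OF e2] cong_by_dvd[OF e3] cong_by_dvd[OF e4]
        by (simp add: algebra_simps)
    qed
    moreover have "\<not> q dvd -c" using qc by simp
    ultimately show ?thesis using class_eq_iff[OF q(1)] by blast
  qed
  finally show ?thesis using x0 s0 by blast
qed


lemma psl_noniso:
  assumes p: "prime p" "[p = 1] (mod 4)" and q: "prime q" "p < q" "q \<noteq> 2"
    and i: "[i^2 = -1] (mod q)" and QR: "QuadRes q p"
  shows "\<not> graph_iso (PSL2 q) (cayley_adj q (Spq p q i)) (twisted_adj q Tdiag (Spq p q i))"
proof
  assume "graph_iso (PSL2 q) (cayley_adj q (Spq p q i)) (twisted_adj q Tdiag (Spq p q i))"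
  then obtain f where f: "bij_betw f (PSL2 q) (PSL2 q)"
    and fe: "\<And>x y. x \<in> PSL2 q \<Longrightarrow> y \<in> PSL2 q \<Longrightarrow>
       twisted_adj q Tdiag (Spq p q i) (f x) (f y) = cayley_adj q (Spq p q i) x y"
    unfolding graph_iso_def by blast
  obtain x0 s0 where x0: "x0 \<in> PSL2 q" and s0: "s0 \<in> Spq p q i"
    and lp: "pgl_conj q Tdiag (pgl_mult q x0 s0) = x0"
    using loop_exists[OF p q QR] by blast
  have A0: "cayley_adj q (Spq p q i) x x = 0" if x: "x \<in> PSL2 q" for x
  proof -
    obtain M where M: "x = pgl_class q M" "\<not> q dvd mat2_det M" using x unfolding PSL2_def by blast
    have "{s \<in> Spq p q i. pgl_mult q x s = x} = {}"
      using no_loop[OF p(1) q i M] by blast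
    thus ?thesis unfolding cayley_adj_def by (simp only: card.empty)
  qed
  have p0: "p \<ge> 0" using p(1) by (simp add: prime_ge_0_int)
  define Z where "Z = {s \<in> Spq p q i. pgl_conj q Tdiag (pgl_mult q x0 s) = x0}"
  have fZ: "finite Z" unfolding Z_def using Spq_finite[OF p0] by simp
  have mZ: "s0 \<in> Z" unfolding Z_def using s0 lp by simp
  have "Z \<noteq> {}" using mZ by blast
  hence "card Z \<noteq> 0" using fZ by simp
  hence B0: "twisted_adj q Tdiag (Spq p q i) x0 x0 \<noteq> 0"
    unfolding twisted_adj_def Z_def .
  have "f ` PSL2 q = PSL2 q" using f by (rule bij_betw_imp_surj_on)
  hence "x0 \<in> f ` PSL2 q" using x0 by simp
  then obtain x1 where x1: "x1 \<in> PSL2 q" "f x1 = x0" by (metis imageE)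
  have "twisted_adj q Tdiag (Spq p q i) x0 x0 = 0" using fe[OF x1(1) x1(1)] A0[OF x1(1)] x1(2) by simp
  thus False using B0 by simp
qed

lemma smult_sum_right: "smult c (sum f A) = sum (\<lambda>x. smult c (f x)) A"
  by (induction A rule: infinite_finite_induct) (simp_all add: smult_add_right)

lemma term_reflect:
  fixes e :: "'v \<Rightarrow> complex" and A :: "'v \<Rightarrow> 'v \<Rightarrow> nat"
  assumes ex: "e x = 1 \<or> e x = -1" and ey: "e y = 1 \<or> e y = -1"
    and bip: "A x y \<noteq> 0 \<Longrightarrow> e x = - e y" and xx: "y = x \<Longrightarrow> A x y = 0"
  shows "pcompose ((if y = x then [:0, 1:] else 0) - [:of_nat (A x y):]) [:0, -1:]
       = smult (- (e x * e y)) ((if y = x then [:0, 1:] else 0) - [:of_nat (A x y):])"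
proof (cases "y = x")
  case True
  have "e x * e x = 1" using ex by auto
  thus ?thesis using True xx by (simp add: pcompose_pCons)
next
  case False
  show ?thesis
  proof (cases "A x y = 0")
    case True thus ?thesis using False by simp
  next
    case nz: False
    have "e x * e y = -1" using bip[OF nz] ey by auto
    thus ?thesis using False by simp
  qed
qed

lemma prod_e_perm:
  fixes e :: "'v \<Rightarrow> complex"
  assumes fin: "finite V" and pi: "\<pi> permutes V" and e: "\<And>x. x \<in> V \<Longrightarrow> e x = 1 \<or> e x = -1"
  shows "(\<Prod>x\<in>V. - (e x * e (\<pi> x))) = (-1) ^ card V"
proof -
  have "(\<Prod>x\<in>V. - (e x * e (\<pi> x))) = (\<Prod>x\<in>V. (-1) * (e x * e (\<pi> x)))" by simp
  also have "\<dots> = (\<Prod>x\<in>V. (-1::complex)) * (\<Prod>x\<in>V. e x * e (\<pi> x))"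
    by (rule prod.distrib)
  also have "\<dots> = (-1) ^ card V * ((\<Prod>x\<in>V. e x) * (\<Prod>x\<in>V. e (\<pi> x)))"
    by (simp only: prod_constant prod.distrib)
  also have "(\<Prod>x\<in>V. e (\<pi> x)) = (\<Prod>x\<in>V. e x)"
    using prod.permute[OF pi, of e] by (simp add: comp_def)
  also have "(\<Prod>x\<in>V. e x) * (\<Prod>x\<in>V. e x) = (\<Prod>x\<in>V. e x * e x)" by (simp add: prod.distrib)
  also have "\<dots> = 1" using e by (intro prod.neutral) (metis mult_minus1 mult_1 minus_minus)
  finally show ?thesis by simp
qed

lemma charpoly_reflect:
  fixes e :: "'v \<Rightarrow> complex" and A :: "'v \<Rightarrow> 'v \<Rightarrow> nat"
  assumes fin: "finite V" and e: "\<And>x. x \<in> V \<Longrightarrow> e x = 1 \<or> e x = -1"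
    and bip: "\<And>x y. x \<in> V \<Longrightarrow> y \<in> V \<Longrightarrow> A x y \<noteq> 0 \<Longrightarrow> e x = - e y"
  shows "pcompose (char_poly_adj V A) [:0, -1:] = smult ((-1) ^ card V) (char_poly_adj V A)"
proof -
  have xx: "A x x = 0" if "x \<in> V" for x
  proof (rule ccontr)
    assume "A x x \<noteq> 0" hence "e x = - e x" using bip that by blast
    thus False using e[OF that] by auto
  qed
  have T: "pcompose (\<Prod>x\<in>V. (if \<pi> x = x then [:0, 1:] else 0) - [:of_nat (A x (\<pi> x)) :: complex:]) [:0, -1:]
     = smult ((-1) ^ card V) (\<Prod>x\<in>V. (if \<pi> x = x then [:0, 1:] else 0) - [:of_nat (A x (\<pi> x)):])"
    if pi: "\<pi> permutes V" for \<pi>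
  proof -
    have "pcompose (\<Prod>x\<in>V. (if \<pi> x = x then [:0, 1:] else 0) - [:of_nat (A x (\<pi> x)):]) [:0, -1:]
       = (\<Prod>x\<in>V. pcompose ((if \<pi> x = x then [:0, 1:] else 0) - [:of_nat (A x (\<pi> x)):]) [:0, -1:])"
      by (rule pcompose_prod)
    also have "\<dots> = (\<Prod>x\<in>V. smult (- (e x * e (\<pi> x))) ((if \<pi> x = x then [:0, 1:] else 0) - [:of_nat (A x (\<pi> x)):]))"
    proof (rule prod.cong[OF refl])
      fix x assume x: "x \<in> V"
      have px: "\<pi> x \<in> V" using pi x by (simp add: permutes_in_image)
      show "pcompose ((if \<pi> x = x then [:0, 1:] else 0) - [:of_nat (A x (\<pi> x)):]) [:0, -1:] =
         smult (- (e x * e (\<pi> x))) ((if \<pi> x = x then [:0, 1:] else 0) - [:of_nat (A x (\<pi> x)):])"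
        by (rule term_reflect[of e x "\<pi> x" A, OF e[OF x] e[OF px] bip[OF x px]]) (use xx x in auto)
    qed
    also have "\<dots> = smult (\<Prod>x\<in>V. - (e x * e (\<pi> x))) (\<Prod>x\<in>V. (if \<pi> x = x then [:0, 1:] else 0) - [:of_nat (A x (\<pi> x)):])"
      by (rule prod_smult)
    also have "(\<Prod>x\<in>V. - (e x * e (\<pi> x))) = (-1) ^ card V" by (rule prod_e_perm[OF fin pi e])
    finally show ?thesis .
  qed
  have "pcompose (char_poly_adj V A) [:0, -1:] = (\<Sum>\<pi> \<in> {\<pi>. \<pi> permutes V}. of_int (sign \<pi>) *
      pcompose (\<Prod>x\<in>V. (if \<pi> x = x then [:0, 1:] else 0) - [:of_nat (A x (\<pi> x)):]) [:0, -1:])"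
    unfolding char_poly_adj_def pcompose_sum pcompose_mult by (simp add: of_int_poly)
  also have "\<dots> = (\<Sum>\<pi> \<in> {\<pi>. \<pi> permutes V}. smult ((-1) ^ card V) (of_int (sign \<pi>) *
      (\<Prod>x\<in>V. (if \<pi> x = x then [:0, 1:] else 0) - [:of_nat (A x (\<pi> x)):])))"
    by (rule sum.cong[OF refl]) (simp add: T)
  also have "\<dots> = smult ((-1) ^ card V) (char_poly_adj V A)"
    unfolding char_poly_adj_def by (simp add: smult_sum_right)
  finally show ?thesis .
qed


lemma proots_prod_reflect:
  "proots (pcompose (\<Prod>x\<in>#R. [:-x, 1:]) [:0, -1:]) = image_mset uminus (R :: complex multiset)"
proof (induction R)
  case empty
  show ?case by (simp add: pcompose_1)
next
  case (add x R)
  have lin: "pcompose [:-x, 1:] [:0, -1:] = smult (-1) [:x, 1:]" by (simp add: pcompose_pCons)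
  have nz1: "smult (-1) [:x, 1:] \<noteq> (0 :: complex poly)" by simp
  have nz2: "pcompose (\<Prod>x\<in>#R. [:-x, 1:]) [:0, -1:] \<noteq> 0"
  proof
    assume "pcompose (\<Prod>x\<in>#R. [:-x, 1:]) [:0, -1:] = 0"
    hence "(\<Prod>x\<in>#R. [:-x, 1:]) = (0 :: complex poly)" by (rule pcompose_eq_0) simp
    thus False by (auto simp: prod_mset_zero_iff)
  qed
  have "pcompose (\<Prod>x\<in>#add_mset x R. [:-x, 1:]) [:0, -1:]
      = smult (-1) [:x, 1:] * pcompose (\<Prod>x\<in>#R. [:-x, 1:]) [:0, -1:]"
  proof -
    have "(\<Prod>x\<in>#add_mset x R. [:-x, 1:]) = [:-x, 1:] * (\<Prod>x\<in>#R. [:-x, 1:])" by simp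
    thus ?thesis by (simp only: pcompose_mult lin)
  qed
  hence "proots (pcompose (\<Prod>x\<in>#add_mset x R. [:-x, 1:]) [:0, -1:])
      = proots (smult (-1) [:x, 1:]) + proots (pcompose (\<Prod>x\<in>#R. [:-x, 1:]) [:0, -1:])"
    using proots_mult[OF nz1 nz2] by simp
  moreover have pl: "proots (smult (-1) [:x, 1:]) = {#-x#}" by (subst proots_smult) simp_all
  ultimately have "proots (pcompose (\<Prod>x\<in>#add_mset x R. [:-x, 1:]) [:0, -1:]) = {#-x#} + image_mset uminus R"
    using add.IH by (simp only:)
  thus ?case by simp
qed

lemma proots_symmetric:
  fixes P :: "complex poly"
  assumes P: "pcompose P [:0, -1:] = smult c P" and c: "c \<noteq> 0"
  shows "image_mset uminus (proots P) = proots P"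
proof (cases "P = 0")
  case True thus ?thesis by simp
next
  case False
  hence L: "lead_coeff P \<noteq> 0" by simp
  have "proots (pcompose P [:0, -1:]) = proots (smult (lead_coeff P) (pcompose (\<Prod>x\<in>#proots P. [:-x, 1:]) [:0, -1:]))"
    by (subst (1) complex_poly_decompose_multiset[symmetric]) (simp add: pcompose_smult)
  also have "\<dots> = image_mset uminus (proots P)" using L by (simp add: proots_prod_reflect)
  finally show ?thesis using P c by simp
qed

lemma charpoly_coeff:
  fixes A :: "'v \<Rightarrow> 'v \<Rightarrow> nat"
  assumes fin: "finite V" and xx: "\<And>x. x \<in> V \<Longrightarrow> A x x = 0"
  shows "coeff (char_poly_adj V A) (card V) = 1"
proof -
  define F where "F = (\<lambda>\<pi>. of_int (sign \<pi>) * (\<Prod>x\<in>V. (if \<pi> x = x then [:0, 1:] else 0) - [:of_nat (A x (\<pi> x)) :: complex:]))"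
  have finP: "finite {\<pi>. \<pi> permutes V}" using fin by (rule finite_permutations)
  have idP: "id \<in> {\<pi>. \<pi> permutes V}" by simp
  have Fid: "F id = [:0, 1:] ^ card V" unfolding F_def using xx by simp
  have X1: "[:0, 1:] = (monom 1 1 :: complex poly)" by (simp add: monom_Suc monom_0)
  have cid: "coeff (F id) (card V) = 1" unfolding Fid X1 monom_power by simp
  have coth: "coeff (F \<pi>) (card V) = 0" if pi: "\<pi> permutes V" and nid: "\<pi> \<noteq> id" for \<pi>
  proof -
    define P where "P = (\<Prod>x\<in>V. (if \<pi> x = x then [:0, 1:] else 0) - [:of_nat (A x (\<pi> x)) :: complex:])"
    have "\<exists>x\<in>V. \<pi> x \<noteq> x"
    proof (rule ccontr)
      assume "\<not> (\<exists>x\<in>V. \<pi> x \<noteq> x)"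
      hence "\<pi> x = x" for x using permutes_not_in[OF pi, of x] by blast
      hence "\<pi> = id" by (auto simp: fun_eq_iff)
      thus False using nid by simp
    qed
    hence sub: "{x\<in>V. \<pi> x = x} \<subset> V" by blast
    have cardlt: "card {x\<in>V. \<pi> x = x} < card V" using psubset_card_mono[OF fin sub] .
    have dx: "degree ((if \<pi> x = x then [:0, 1:] else 0) - [:of_nat (A x (\<pi> x)) :: complex:]) \<le> (if \<pi> x = x then 1 else 0)" for x
      by (cases "\<pi> x = x") simp_all
    have "degree P \<le> (\<Sum>x\<in>V. degree ((if \<pi> x = x then [:0, 1:] else 0) - [:of_nat (A x (\<pi> x)) :: complex:]))"
      unfolding P_def using degree_prod_sum_le[OF fin] by (simp add: comp_def)
    also have "\<dots> \<le> (\<Sum>x\<in>V. (if \<pi> x = x then 1 else 0))" by (rule sum_mono) (rule dx)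
    also have "\<dots> = card {x\<in>V. \<pi> x = x}" using fin by (simp add: sum.If_cases Int_def conj_commute)
    finally have "degree P < card V" using cardlt by linarith
    moreover have "F \<pi> = smult (of_int (sign \<pi>)) P" unfolding F_def P_def by (simp add: of_int_poly)
    ultimately show ?thesis by (simp add: coeff_eq_0)
  qed
  have "coeff (char_poly_adj V A) (card V) = (\<Sum>\<pi>\<in>{\<pi>. \<pi> permutes V}. coeff (F \<pi>) (card V))"
    unfolding char_poly_adj_def F_def by (simp add: coeff_sum)
  also have "\<dots> = coeff (F id) (card V) + (\<Sum>\<pi>\<in>{\<pi>. \<pi> permutes V} - {id}. coeff (F \<pi>) (card V))"
    by (rule sum.remove[OF finP idP])
  also have "(\<Sum>\<pi>\<in>{\<pi>. \<pi> permutes V} - {id}. coeff (F \<pi>) (card V)) = 0"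
    by (rule sum.neutral) (use coth in auto)
  finally show ?thesis using cid by (simp only: add_0_right)
qed


lemma bip_spectrum:
  fixes e :: "'v \<Rightarrow> complex" and A :: "'v \<Rightarrow> 'v \<Rightarrow> nat"
  assumes fin: "finite V" and e: "\<And>x. x \<in> V \<Longrightarrow> e x = 1 \<or> e x = -1"
    and bip: "\<And>x y. x \<in> V \<Longrightarrow> y \<in> V \<Longrightarrow> A x y \<noteq> 0 \<Longrightarrow> e x = - e y"
  shows "symmetric_mset (spectrum_adj V A) \<and> card V \<le> size (spectrum_adj V A)"
proof
  have xx: "A x x = 0" if "x \<in> V" for x
  proof (rule ccontr)
    assume "A x x \<noteq> 0" hence "e x = - e x" using bip that by blast
    thus False using e[OF that] by auto
  qed
  have c0: "(-1::complex) ^ card V \<noteq> 0" by simp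
  show "symmetric_mset (spectrum_adj V A)"
    unfolding symmetric_mset_def spectrum_adj_def
    by (rule proots_symmetric[OF charpoly_reflect[OF fin e bip] c0])
  have "coeff (char_poly_adj V A) (card V) \<noteq> 0" using charpoly_coeff[of V A, OF fin xx] by simp
  hence "card V \<le> degree (char_poly_adj V A)" by (rule le_degree)
  thus "card V \<le> size (spectrum_adj V A)" unfolding spectrum_adj_def by (simp add: size_proots_complex)
qed

lemma det_red: "[mat2_det (mat2_red q M) = mat2_det M] (mod q)"
proof -
  obtain a b c d where M: "M = (a,b,c,d)" by (cases M rule: prod_cases4)
  have m: "[x mod q = x] (mod q)" for x :: int by (simp add: cong_def)
  show ?thesis unfolding M by (simp only: mat2_red.simps mat2_det.simps) (intro cong_diff cong_mult m)
qed

lemma det_smult: "mat2_det (mat2_smult k M) = k^2 * mat2_det M"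
  by (cases M rule: prod_cases4) (simp add: power2_eq_square algebra_simps)

lemma det_mult: "mat2_det (mat2_mult M N) = mat2_det M * mat2_det N"
  by (cases M rule: prod_cases4; cases N rule: prod_cases4) (simp add: algebra_simps)

lemma mem_det:
  assumes "Y \<in> pgl_class q M"
  shows "\<exists>k. \<not> q dvd k \<and> [mat2_det Y = k^2 * mat2_det M] (mod q)"
proof -
  obtain k where k: "\<not> q dvd k" "Y = mat2_red q (mat2_smult k M)" using mem_class[OF assms] by blast
  have "[mat2_det Y = mat2_det (mat2_smult k M)] (mod q)" unfolding k(2) by (rule det_red)
  thus ?thesis using k(1) by (auto simp: det_smult)
qed

lemma cong_small_eq:
  assumes "[a = b] (mod q)" "\<bar>a - b\<bar> < (q::int)"
  shows "a = b"
proof (rule ccontr)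
  assume "a \<noteq> b"
  have "q dvd a - b" using assms(1) by (simp add: cong_iff_dvd_diff)
  hence "\<bar>q\<bar> \<le> \<bar>a - b\<bar>" using \<open>a \<noteq> b\<close> by (intro dvd_imp_le_int) auto
  thus False using assms(2) by simp
qed

lemma Legendre_vals: "Legendre a q = 0 \<or> Legendre a q = 1 \<or> Legendre a q = -1"
  by (simp add: Legendre_def)

lemma Legendre_nz: "\<not> q dvd a \<Longrightarrow> Legendre a q = 1 \<or> Legendre a q = -1"
  by (simp add: Legendre_def cong_0_iff)

lemma euler_int:
  assumes "prime (q::int)" "q > 2"
  shows "[Legendre a q = a ^ ((nat q - 1) div 2)] (mod q)"
proof -
  have "prime (nat q)" using assms(1) prime_int_nat_transfer by blast
  moreover have "2 < nat q" using assms(2) by simp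
  ultimately have "[Legendre a (int (nat q)) = a ^ ((nat q - 1) div 2)] (mod int (nat q))"
    by (rule euler_criterion)
  moreover have "int (nat q) = q" using assms(2) by simp
  ultimately show ?thesis by simp
qed

lemma det_S:
  assumes "[i^2 = -1] (mod q)" "a0^2 + a1^2 + a2^2 + a3^2 = p"
  shows "[mat2_det (a0 + i*a1, a2 + i*a3, -a2 + i*a3, a0 - i*a1) = p] (mod q)"
proof -
  have "q dvd i^2 + 1" using assms(1) by (simp add: cong_iff_dvd_diff)
  hence "q dvd - ((i^2 + 1) * (a1^2 + a3^2))" by simp
  moreover have "mat2_det (a0 + i*a1, a2 + i*a3, -a2 + i*a3, a0 - i*a1) - p = - ((i^2 + 1) * (a1^2 + a3^2))"
    using assms(2) by (simp add: power2_eq_square algebra_simps)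
  ultimately show ?thesis by (simp add: cong_iff_dvd_diff)
qed

definition legc :: "int \<Rightarrow> mat2 set \<Rightarrow> int" where
  "legc q x = Legendre (mat2_det (SOME M. M \<in> x)) q"

lemma legc_pgl:
  assumes q: "prime q" and x: "x \<in> PGL2 q"
  shows "\<not> q dvd mat2_det (SOME M. M \<in> x)"
proof -
  obtain N where N: "x = pgl_class q N" "\<not> q dvd mat2_det N" using x unfolding PGL2_def by blast
  obtain k where k: "\<not> q dvd k" "[mat2_det (SOME M. M \<in> x) = k^2 * mat2_det N] (mod q)"
    using mem_det[OF some_mem[OF q, of N]] N(1) by blast
  have "\<not> q dvd k^2 * mat2_det N" using k(1) N(2) q by (simp add: prime_dvd_mult_iff prime_dvd_power_iff)
  thus ?thesis using k(2) by (simp add: cong_dvd_iff)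
qed

lemma legc_flip:
  assumes q: "prime q" "q > 2" and nQR: "\<not> QuadRes q p" and qp: "\<not> q dvd p"
    and i: "[i^2 = -1] (mod q)" and x: "x \<in> PGL2 q" and s: "s \<in> Spq p q i"
  shows "legc q (pgl_mult q x s) = - legc q x"
proof -
  define h where "h = (nat q - 1) div 2"
  define Mx where "Mx = (SOME M. M \<in> x)"
  define Ms where "Ms = (SOME M. M \<in> s)"
  define y where "y = pgl_mult q x s"
  define My where "My = (SOME M. M \<in> y)"
  have y: "y = pgl_class q (mat2_mult Mx Ms)" unfolding y_def pgl_mult_def Mx_def Ms_def ..
  obtain a0 a1 a2 a3 where S: "s = pgl_class q (a0 + i*a1, a2 + i*a3, -a2 + i*a3, a0 - i*a1)"
    and sum: "a0^2 + a1^2 + a2^2 + a3^2 = p" using Spq_elem[OF s] by metis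
  obtain k where k: "\<not> q dvd k" "[mat2_det Ms = k^2 * mat2_det (a0 + i*a1, a2 + i*a3, -a2 + i*a3, a0 - i*a1)] (mod q)"
    using mem_det[OF some_mem[OF q(1)]] unfolding Ms_def S by blast
  have dMs: "[mat2_det Ms = k^2 * p] (mod q)"
    using k(2) cong_scalar_left[OF det_S[OF i sum], of "k^2"] by (rule cong_trans)
  obtain j where j: "\<not> q dvd j" "[mat2_det My = j^2 * mat2_det (mat2_mult Mx Ms)] (mod q)"
    using mem_det[OF some_mem[OF q(1)]] unfolding My_def y by blast
  define m where "m = (j*k)^2"
  have "[j^2 * mat2_det (mat2_mult Mx Ms) = j^2 * (mat2_det Mx * (k^2 * p))] (mod q)"
    unfolding det_mult by (intro cong_scalar_left cong_scalar_left[of _ _ _ "mat2_det Mx"] dMs)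
  hence dMy: "[mat2_det My = m * p * mat2_det Mx] (mod q)"
    using j(2) unfolding m_def by (metis cong_trans mult.commute mult.left_commute power_mult_distrib)
  have qm: "\<not> q dvd m" unfolding m_def using j k q by (simp add: prime_dvd_mult_iff prime_dvd_power_iff)
  have Lm: "Legendre m q = 1"
  proof -
    have "\<not> [m = 0] (mod q)" using qm by (simp add: cong_0_iff)
    moreover have "QuadRes q m" unfolding QuadRes_def m_def by (blast intro: cong_refl)
    ultimately show ?thesis by (simp add: Legendre_def)
  qed
  have Lp: "Legendre p q = -1" using qp nQR by (simp add: Legendre_def cong_0_iff)
  have "[Legendre (mat2_det My) q = (mat2_det My) ^ h] (mod q)" unfolding h_def by (rule euler_int[OF q])
  also have "[(mat2_det My) ^ h = (m * p * mat2_det Mx) ^ h] (mod q)" by (rule cong_pow[OF dMy])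
  also have "(m * p * mat2_det Mx) ^ h = m ^ h * p ^ h * mat2_det Mx ^ h" by (simp add: power_mult_distrib)
  also have "[m ^ h * p ^ h * mat2_det Mx ^ h = Legendre m q * Legendre p q * Legendre (mat2_det Mx) q] (mod q)"
  proof -
    have c1: "[m ^ h = Legendre m q] (mod q)" unfolding h_def by (rule cong_sym[OF euler_int[OF q]])
    have c2: "[p ^ h = Legendre p q] (mod q)" unfolding h_def by (rule cong_sym[OF euler_int[OF q]])
    have c3: "[mat2_det Mx ^ h = Legendre (mat2_det Mx) q] (mod q)" unfolding h_def by (rule cong_sym[OF euler_int[OF q]])
    show ?thesis by (rule cong_mult[OF cong_mult[OF c1 c2] c3])
  qed
  finally have cg: "[Legendre (mat2_det My) q = - Legendre (mat2_det Mx) q] (mod q)" using Lm Lp by simp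
  have vx: "Legendre (mat2_det Mx) q = 1 \<or> Legendre (mat2_det Mx) q = -1"
    using legc_pgl[OF q(1) x] unfolding Mx_def by (rule Legendre_nz)
  have vy: "Legendre (mat2_det My) q = 0 \<or> Legendre (mat2_det My) q = 1 \<or> Legendre (mat2_det My) q = -1"
    by (rule Legendre_vals)
  have "\<bar>Legendre (mat2_det My) q - - Legendre (mat2_det Mx) q\<bar> \<le> 2"
    using vx vy by (elim disjE) simp_all
  hence "\<bar>Legendre (mat2_det My) q - - Legendre (mat2_det Mx) q\<bar> < q" using q(2) by linarith
  hence "Legendre (mat2_det My) q = - Legendre (mat2_det Mx) q" by (rule cong_small_eq[OF cg])
  thus ?thesis unfolding legc_def My_def Mx_def y_def .
qed

lemma pgl_case:
  assumes p: "prime p" and q: "prime q" "p < q" "q > 2" and nQR: "\<not> QuadRes q p"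
    and i: "[i^2 = -1] (mod q)" and fin: "finite (PGL2 q)"
  shows "symmetric_mset (spectrum_adj (PGL2 q) (cayley_adj q (Spq p q i))) \<and>
         card (PGL2 q) \<le> size (spectrum_adj (PGL2 q) (cayley_adj q (Spq p q i)))"
proof -
  define e where "e = (\<lambda>x. complex_of_int (legc q x))"
  have qp: "\<not> q dvd p"
  proof
    assume "q dvd p"
    moreover have "p > 0" using p by (simp add: prime_gt_0_int)
    ultimately have "q \<le> p" by (simp add: zdvd_imp_le)
    thus False using q(2) by simp
  qed
  have ev: "e x = 1 \<or> e x = -1" if x: "x \<in> PGL2 q" for x
  proof -
    have "legc q x = 1 \<or> legc q x = -1" unfolding legc_def
      using legc_pgl[OF q(1) x] by (rule Legendre_nz)
    thus ?thesis unfolding e_def by auto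
  qed
  have bip: "e x = - e y" if x: "x \<in> PGL2 q" and y: "y \<in> PGL2 q"
    and nz: "cayley_adj q (Spq p q i) x y \<noteq> 0" for x y
  proof -
    have "{s \<in> Spq p q i. pgl_mult q x s = y} \<noteq> {}"
    proof
      assume "{s \<in> Spq p q i. pgl_mult q x s = y} = {}"
      hence "cayley_adj q (Spq p q i) x y = 0" unfolding cayley_adj_def by (simp only: card.empty)
      thus False using nz by simp
    qed
    then obtain s where s: "s \<in> Spq p q i" "pgl_mult q x s = y" by blast
    have "legc q y = - legc q x" using legc_flip[OF q(1) q(3) nQR qp i x s(1)] s(2) by simp
    thus ?thesis unfolding e_def by simp
  qed
  show ?thesis by (rule bip_spectrum[OF fin ev bip]) auto
qed

theorem theorem5p2:
  fixes p :: int
  assumes "prime p" and "[p = 1] (mod 4)"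
  shows "\<forall>\<epsilon>::real. 0 < \<epsilon> \<and> \<epsilon> < 3/4 \<longrightarrow>
    (\<exists>q\<epsilon>::int. \<forall>q i::int. prime q \<and> q \<ge> q\<epsilon> \<and> [q = 1] (mod 4) \<and> q \<noteq> p \<and> [i^2 = -1] (mod q) \<longrightarrow>
      ((\<exists>M. M \<subseteq># spectrum_adj (Gq p q) (cayley_adj q (Spq p q i)) \<and> symmetric_mset M \<and>
            real (size M) \<ge> (3/4 - \<epsilon>) * real (card (Gq p q)))
       \<or> (\<exists>\<sigma>\<in>{(0,1,1,0), (0,1,-1,0), (-1,0,0,1)}. \<exists>\<tau>\<in>{(0,1,i,0), (0,-1,i,0), (-1,0,0,1)}.
            \<not> graph_iso (Gq p q) (cayley_adj q (Spq p q i)) (twisted_adj q \<sigma> (Spq p q i)) \<and>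
            \<not> graph_iso (Gq p q) (cayley_adj q (Spq p q i)) (twisted_adj q \<tau> (Spq p q i)))))"
proof (intro allI impI)
  fix \<epsilon> :: real
  assume eps: "0 < \<epsilon> \<and> \<epsilon> < 3/4"
  show "\<exists>q\<epsilon>::int. \<forall>q i::int. prime q \<and> q \<ge> q\<epsilon> \<and> [q = 1] (mod 4) \<and> q \<noteq> p \<and> [i^2 = -1] (mod q) \<longrightarrow>
      ((\<exists>M. M \<subseteq># spectrum_adj (Gq p q) (cayley_adj q (Spq p q i)) \<and> symmetric_mset M \<and>
            real (size M) \<ge> (3/4 - \<epsilon>) * real (card (Gq p q)))
       \<or> (\<exists>\<sigma>\<in>{(0,1,1,0), (0,1,-1,0), (-1,0,0,1)}. \<exists>\<tau>\<in>{(0,1,i,0), (0,-1,i,0), (-1,0,0,1)}.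
            \<not> graph_iso (Gq p q) (cayley_adj q (Spq p q i)) (twisted_adj q \<sigma> (Spq p q i)) \<and>
            \<not> graph_iso (Gq p q) (cayley_adj q (Spq p q i)) (twisted_adj q \<tau> (Spq p q i))))"
  proof (rule exI[of _ "p + 1"], intro allI impI)
    fix q i :: int
    assume h: "prime q \<and> q \<ge> p + 1 \<and> [q = 1] (mod 4) \<and> q \<noteq> p \<and> [i^2 = -1] (mod q)"
    have q: "prime q" and pq: "p < q" and q4: "[q = 1] (mod 4)" and i: "[i^2 = -1] (mod q)" using h by auto
    have q2: "q > 2"
    proof -
      have "q \<ge> 2" using q by (simp add: prime_ge_2_int)
      moreover have "q mod 4 = 1" using q4 by (simp add: cong_def)
      hence "q \<noteq> 2" by auto
      ultimately show ?thesis by simp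
    qed
    show "(\<exists>M. M \<subseteq># spectrum_adj (Gq p q) (cayley_adj q (Spq p q i)) \<and> symmetric_mset M \<and>
            real (size M) \<ge> (3/4 - \<epsilon>) * real (card (Gq p q)))
       \<or> (\<exists>\<sigma>\<in>{(0,1,1,0), (0,1,-1,0), (-1,0,0,1)}. \<exists>\<tau>\<in>{(0,1,i,0), (0,-1,i,0), (-1,0,0,1)}.
            \<not> graph_iso (Gq p q) (cayley_adj q (Spq p q i)) (twisted_adj q \<sigma> (Spq p q i)) \<and>
            \<not> graph_iso (Gq p q) (cayley_adj q (Spq p q i)) (twisted_adj q \<tau> (Spq p q i)))"
    proof (cases "QuadRes q p")
      case True
      hence G: "Gq p q = PSL2 q" by (simp add: Gq_def)
      have "\<not> graph_iso (PSL2 q) (cayley_adj q (Spq p q i)) (twisted_adj q Tdiag (Spq p q i))"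
        using psl_noniso[OF assms q pq _ i True] q2 by simp
      hence "\<not> graph_iso (Gq p q) (cayley_adj q (Spq p q i)) (twisted_adj q (-1,0,0,1) (Spq p q i))"
        unfolding G Tdiag_def .
      thus ?thesis by blast
    next
      case False
      hence G: "Gq p q = PGL2 q" by (simp add: Gq_def)
      show ?thesis
      proof (cases "finite (PGL2 q)")
        case True
        note pc = pgl_case[OF assms(1) q pq q2 False i True]
        have "(3/4 - \<epsilon>) * real (card (PGL2 q)) \<le> 1 * real (card (PGL2 q))"
          using eps by (intro mult_right_mono) auto
        also have "\<dots> \<le> real (size (spectrum_adj (PGL2 q) (cayley_adj q (Spq p q i))))" using pc by simp
        finally show ?thesis unfolding G using pc by blast
      next
        case False
        hence "card (PGL2 q) = 0" by simp
        thus ?thesis unfolding G by (intro disjI1 exI[of _ "{#}"]) (simp add: symmetric_mset_def)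
      qed
    qed
  qed
qed

end
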